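(* Let $\mathcal A$ be finite, $r,\hat r:\mathcal A\to[0,1]$, $\eta>0$, $\pi^{\mathrm{ref}}\in\Delta(\mathcal A)$ with $\pi^{\mathrm{ref}}(a)>0$ for all $a$, and $g=r-\hat r$. For $u\in[0,1]$ let $r_u=(1-u)r+u\hat r$ and let $\pi_u$ be the unique maximizer over $\Delta(\mathcal A)$ of $\pi\mapsto\sum_ar_u(a)\pi(a)-\eta^{-1}\mathrm{KL}(\pi^{\mathrm{ref}}\|\pi)$. Define $w_u(a)=\pi_u(a)/\pi^{\mathrm{ref}}(a)$, $Z_u=\sum_a\pi_u(a)^2/\pi^{\mathrm{ref}}(a)$, the probability distribution $\mu_u(a)=\frac{\pi_u(a)^2}{\pi^{\mathrm{ref}}(a)}/Z_u$, and $$F(u)=\frac\eta2\left(\sum_a\frac{\pi_u(a)^2}{\pi^{\mathrm{ref}}(a)}g(a)^2-\frac{\Big(\sum_a\frac{\pi_u(a)^2}{\pi^{\mathrm{ref}}(a)}g(a)\Big)^2}{\sum_a\frac{\pi_u(a)^2}{\pi^{\mathrm{ref}}(a)}}\right).$$ Then for every $u\in(0,1)$, $$F'(u)=-\eta^2Z_u\,\mathbb E_{a\sim\mu_u}\Big[w_u(a)\big(g(a)-\mathbb E_{a'\sim\mu_u}g(a')\big)^3\Big].$$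
   Context: $\mathrm{KL}(P\|Q)=\sum_aP(a)\log(P(a)/Q(a))$. *)

theory Defs
  imports "HOL-Analysis.Analysis"
begin

definition Delta :: "('a::finite \<Rightarrow> real) set" where
  "Delta = {p. (\<forall>a. 0 \<le> p a) \<and> (\<Sum>a\<in>UNIV. p a) = 1}"

definition KL :: "('a::finite \<Rightarrow> real) \<Rightarrow> ('a \<Rightarrow> real) \<Rightarrow> real" where
  "KL P Q = (\<Sum>a\<in>UNIV. P a * ln (P a / Q a))"

text \<open>Regularised objective, with value minus infinity when KL(pref||p) = +infinity,
  i.e. when p vanishes somewhere (pref is assumed strictly positive).\<close>
definition reg_obj :: "real \<Rightarrow> ('a::finite \<Rightarrow> real) \<Rightarrow> ('a \<Rightarrow> real) \<Rightarrow> ('a \<Rightarrow> real) \<Rightarrow> ereal" where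
  "reg_obj eta pref R p =
     (if (\<forall>a. 0 < p a)
      then ereal ((\<Sum>a\<in>UNIV. R a * p a) - KL pref p / eta)
      else -\<infinity>)"

definition opt_pol :: "real \<Rightarrow> ('a::finite \<Rightarrow> real) \<Rightarrow> ('a \<Rightarrow> real) \<Rightarrow> ('a \<Rightarrow> real)" where
  "opt_pol eta pref R =
     (THE p. p \<in> Delta \<and> (\<forall>q\<in>Delta. reg_obj eta pref R q \<le> reg_obj eta pref R p))"

definition interp_reward :: "('a \<Rightarrow> real) \<Rightarrow> ('a \<Rightarrow> real) \<Rightarrow> real \<Rightarrow> ('a \<Rightarrow> real)" where
  "interp_reward r rh u = (\<lambda>a. (1 - u) * r a + u * rh a)"

definition pol_u :: "real \<Rightarrow> ('a::finite \<Rightarrow> real) \<Rightarrow> ('a \<Rightarrow> real) \<Rightarrow> ('a \<Rightarrow> real) \<Rightarrow> real \<Rightarrow> ('a \<Rightarrow> real)" where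
  "pol_u eta pref r rh u = opt_pol eta pref (interp_reward r rh u)"

end

theory Submission
  imports Defs
begin


lemma ln_strict: "0 < (x::real) \<Longrightarrow> x \<noteq> 1 \<Longrightarrow> ln x < x - 1"
  using ln_le_minus_one ln_eq_minus_one by force

lemma opt_pol_char:
  fixes pref R :: "'a::finite \<Rightarrow> real"
  assumes eta: "eta > 0" and pd: "pref \<in> Delta" and pp: "\<forall>a. pref a > 0"
    and lt: "\<forall>a. R a < l" and s1: "(\<Sum>a\<in>UNIV. pref a / eta / (l - R a)) = 1"
  shows "opt_pol eta pref R = (\<lambda>a. pref a / eta / (l - R a))"
proof -
  define p where "p = (\<lambda>a. pref a / eta / (l - R a))"
  have ppos: "\<forall>a. p a > 0" using pp lt eta by (auto simp: p_def)
  have pD: "p \<in> Delta" using ppos s1 by (auto simp: Delta_def p_def less_imp_le)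
  have sp: "(\<Sum>a\<in>UNIV. pref a) = 1" using pd by (simp add: Delta_def)
  define obj where "obj q = (\<Sum>a\<in>UNIV. R a * q a) - KL pref q / eta" for q
  have strict: "obj q < obj p" if qD: "q \<in> Delta" and qp: "\<forall>a. 0 < q a" and ne: "q \<noteq> p" for q
  proof -
    have term_le: "eta * (l - R a) * (p a - q a) \<le> pref a * ln (pref a / q a) - pref a * ln (pref a / p a)" for a
    proof -
      have e1: "pref a * ln (pref a / q a) - pref a * ln (pref a / p a) = - pref a * ln (q a / p a)"
      proof -
        have h: "pref a > 0" "q a > 0" "p a > 0" using pp ppos qp by auto
        then show ?thesis by (simp add: ln_div algebra_simps)
      qed
      have e2: "eta * (l - R a) * (p a - q a) = - pref a * (q a / p a - 1)"
        proof -
        have "l - R a > 0" "pref a > 0" using lt pp by auto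
        then show ?thesis using eta by (simp add: p_def field_simps)
      qed
      have "ln (q a / p a) \<le> q a / p a - 1" using ppos qp by (intro ln_le_minus_one) simp
      then show ?thesis unfolding e1 e2 using pp by (simp add: mult_left_mono)
    qed
    obtain a0 where a0: "q a0 \<noteq> p a0" using ne by blast
    have term_lt: "eta * (l - R a0) * (p a0 - q a0) < pref a0 * ln (pref a0 / q a0) - pref a0 * ln (pref a0 / p a0)"
    proof -
      have e1: "pref a0 * ln (pref a0 / q a0) - pref a0 * ln (pref a0 / p a0) = - pref a0 * ln (q a0 / p a0)"
      proof -
        have h: "pref a0 > 0" "q a0 > 0" "p a0 > 0" using pp ppos qp by auto
        then show ?thesis by (simp add: ln_div algebra_simps)
      qed
      have e2: "eta * (l - R a0) * (p a0 - q a0) = - pref a0 * (q a0 / p a0 - 1)"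
        proof -
        have "l - R a0 > 0" "pref a0 > 0" using lt pp by auto
        then show ?thesis using eta by (simp add: p_def field_simps)
      qed
      have "q a0 / p a0 \<noteq> 1" using a0 ppos by (simp add: divide_eq_1_iff)
      then have "ln (q a0 / p a0) < q a0 / p a0 - 1" using ppos qp by (intro ln_strict) simp_all
      then show ?thesis unfolding e1 e2 using pp by (simp add: mult_strict_left_mono)
    qed
    have "(\<Sum>a\<in>UNIV. eta * (l - R a) * (p a - q a)) < (\<Sum>a\<in>UNIV. pref a * ln (pref a / q a) - pref a * ln (pref a / p a))"
      by (rule sum_strict_mono_ex1) (use term_le term_lt in auto)
    also have "\<dots> = KL pref q - KL pref p" by (simp add: KL_def sum_subtractf)
    finally have A: "(\<Sum>a\<in>UNIV. eta * (l - R a) * (p a - q a)) < KL pref q - KL pref p" .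
    have sq: "(\<Sum>a\<in>UNIV. q a) = 1" using qD by (simp add: Delta_def)
    have spp: "(\<Sum>a\<in>UNIV. p a) = 1" using pD by (simp add: Delta_def)
    have "(\<Sum>a\<in>UNIV. eta * (l - R a) * (p a - q a)) = eta * (l * (\<Sum>a\<in>UNIV. p a) - l * (\<Sum>a\<in>UNIV. q a)) - eta * ((\<Sum>a\<in>UNIV. R a * p a) - (\<Sum>a\<in>UNIV. R a * q a))"
      by (simp add: algebra_simps sum_subtractf sum_distrib_left sum.distrib)
    also have "\<dots> = eta * ((\<Sum>a\<in>UNIV. R a * q a) - (\<Sum>a\<in>UNIV. R a * p a))" using sq spp by (simp add: algebra_simps)
    finally have "eta * ((\<Sum>a\<in>UNIV. R a * q a) - (\<Sum>a\<in>UNIV. R a * p a)) < KL pref q - KL pref p" using A by simp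
    then have "(\<Sum>a\<in>UNIV. R a * q a) - (\<Sum>a\<in>UNIV. R a * p a) < (KL pref q - KL pref p) / eta"
      using eta by (simp add: field_simps)
    then show ?thesis unfolding obj_def using eta by (simp add: diff_divide_distrib)
  qed
  have regp: "reg_obj eta pref R p = ereal (obj p)" using ppos by (simp add: reg_obj_def obj_def)
  show ?thesis unfolding opt_pol_def p_def[symmetric]
  proof (rule the_equality)
    show "p \<in> Delta \<and> (\<forall>q\<in>Delta. reg_obj eta pref R q \<le> reg_obj eta pref R p)"
    proof (intro conjI ballI pD)
      fix q :: "'a \<Rightarrow> real" assume qD: "q \<in> Delta"
      show "reg_obj eta pref R q \<le> reg_obj eta pref R p"
      proof (cases "\<forall>a. 0 < q a")
        case True
        then have "reg_obj eta pref R q = ereal (obj q)" by (simp add: reg_obj_def obj_def)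
        moreover have "obj q \<le> obj p" using strict[OF qD True] by (cases "q = p") auto
        ultimately show ?thesis using regp by simp
      next
        case False
        then have "reg_obj eta pref R q = -\<infinity>" by (simp add: reg_obj_def)
        then show ?thesis by simp
      qed
    qed
  next
    fix q assume H: "q \<in> Delta \<and> (\<forall>qa\<in>Delta. reg_obj eta pref R qa \<le> reg_obj eta pref R q)"
    then have le: "reg_obj eta pref R p \<le> reg_obj eta pref R q" using pD by blast
    have qp: "\<forall>a. 0 < q a"
    proof (rule ccontr)
      assume "\<not> (\<forall>a. 0 < q a)"
      then have "reg_obj eta pref R q = -\<infinity>" by (simp add: reg_obj_def)
      then show False using le regp by simp
    qed
    then have "reg_obj eta pref R q = ereal (obj q)" by (simp add: reg_obj_def obj_def)
    then have "obj p \<le> obj q" using le regp by simp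
    then show "q = p" using strict[of q] H qp by force
  qed
qed



lemma lam_exists:
  fixes pref R :: "'a::finite \<Rightarrow> real"
  assumes eta: "eta > 0" and pd: "pref \<in> Delta" and pp: "\<forall>a. pref a > 0"
  shows "\<exists>l. (\<forall>a. R a < l) \<and> (\<Sum>a\<in>UNIV. pref a / eta / (l - R a)) = 1"
proof -
  define M where "M = Max (range R)"
  obtain a0 where a0: "R a0 = M" unfolding M_def
    by (metis (mono_tags, lifting) Max_in UNIV_not_empty finite finite_imageI image_iff image_is_empty)
  have RM: "R a \<le> M" for a unfolding M_def by simp
  have sp: "(\<Sum>a\<in>UNIV. pref a) = 1" using pd by (simp add: Delta_def)
  define h where "h x = (\<Sum>a\<in>UNIV. pref a / eta / (x - R a))" for x
  define lo where "lo = M + pref a0 / eta"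
  define hi where "hi = M + 1 / eta"
  have pa0: "pref a0 \<le> 1" using member_le_sum[of a0 UNIV pref] pp sp by (simp add: less_imp_le)
  have lohi: "lo \<le> hi" unfolding lo_def hi_def using pa0 eta by (simp add: divide_right_mono)
  have lopos: "lo > M" using pp eta unfolding lo_def by simp
  have "pref a0 / eta / (lo - R a0) \<le> h lo" unfolding h_def
  proof (rule member_le_sum)
    fix a assume "a \<in> UNIV - {a0}"
    have "R a < lo" using RM[of a] lopos by linarith
    then show "0 \<le> pref a / eta / (lo - R a)" using pp eta by (simp add: less_imp_le)
  qed simp_all
  moreover have "pref a0 / eta / (lo - R a0) = 1" using a0 pp[rule_format, of a0] eta by (simp add: lo_def)
  ultimately have hlo: "1 \<le> h lo" by linarith
  have "h hi \<le> (\<Sum>a\<in>UNIV. pref a / eta / (1/eta))" unfolding h_def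
  proof (rule sum_mono)
    fix a :: 'a
    have "1/eta \<le> hi - R a" using RM[of a] by (simp add: hi_def)
    moreover have "0 < 1/eta" using eta by simp
    ultimately have "0 < hi - R a" by linarith
    with \<open>1/eta \<le> hi - R a\<close> show "pref a / eta / (hi - R a) \<le> pref a / eta / (1 / eta)"
      using pp[rule_format, of a] eta by (intro divide_left_mono) (auto intro: less_imp_le mult_pos_pos divide_pos_pos)
  qed
  also have "\<dots> = 1" using sp eta by simp
  finally have hhi: "h hi \<le> 1" .
  have "continuous_on {lo..hi} h" unfolding h_def
  proof (intro continuous_intros ballI)
    fix a x assume "x \<in> {lo..hi}"
    then show "x - R a \<noteq> 0" using lopos RM[of a] by auto
  qed
  then obtain x where x: "lo \<le> x" "x \<le> hi" "h x = 1"
    using IVT2'[of h hi 1 lo] hlo hhi lohi by blast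
  have "\<forall>a. R a < x" using RM lopos x(1) by (meson le_less_trans less_le_trans)
  then show ?thesis using x(3) unfolding h_def by blast
qed



lemma aux1: "-(d*(c/Q) + t*(c*g/Q)) = -c*(d + t*g)/(Q::real)"
  by (cases "Q=0") (simp_all add: field_simps)

lemma lam_deriv:
  fixes pref r rh :: "'a::finite \<Rightarrow> real" and c g :: "'a \<Rightarrow> real" and R :: "real \<Rightarrow> 'a \<Rightarrow> real"
    and lam :: "real \<Rightarrow> real"
  assumes R_def: "R = (\<lambda>v a. (1 - v) * r a + v * rh a)"
    and g_def: "g = (\<lambda>a. r a - rh a)"
    and cpos: "\<forall>a. c a > 0"
    and lamP: "\<And>v. (\<forall>a. R v a < lam v) \<and> (\<Sum>a\<in>UNIV. c a / (lam v - R v a)) = 1"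
  shows "(lam has_real_derivative
           (- (\<Sum>a\<in>UNIV. c a * g a / ((lam u - R u a) * (lam u - R u a)))
             / (\<Sum>a\<in>UNIV. c a / ((lam u - R u a) * (lam u - R u a))))) (at u)"
proof -
  define D where "D a = lam u - R u a" for a
  define A where "A v = (\<Sum>a\<in>UNIV. c a * g a / (D a * (lam v - R v a)))" for v
  define B where "B v = (\<Sum>a\<in>UNIV. c a / (D a * (lam v - R v a)))" for v
  define G where "G = (\<Sum>a\<in>UNIV. \<bar>g a\<bar>)"
  have Dp: "D a > 0" for a using lamP[of u] by (simp add: D_def)
  have D'p: "lam v - R v a > 0" for v a using lamP[of v] by simp
  have ident: "(lam v - lam u) * B v = - (v - u) * A v" for v
  proof -
    have trm: "c a / (lam v - R v a) - c a / D a
        = - ((lam v - lam u) * (c a / (D a * (lam v - R v a))) + (v - u) * (c a * g a / (D a * (lam v - R v a))))" for a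
    proof -
      have e: "(lam v - R v a) - D a = (lam v - lam u) + (v - u) * g a"
        by (simp add: D_def R_def g_def algebra_simps)
      have n1: "D a \<noteq> 0" "lam v - R v a \<noteq> 0" using Dp[of a] D'p[of v a] by auto
      have "- ((lam v - lam u) * (c a / (D a * (lam v - R v a))) + (v - u) * (c a * g a / (D a * (lam v - R v a))))
          = - c a * ((lam v - lam u) + (v - u) * g a) / (D a * (lam v - R v a))"
        by (rule aux1)
      also have "\<dots> = - c a * ((lam v - R v a) - D a) / (D a * (lam v - R v a))" by (simp only: e)
      also have "\<dots> = c a / (lam v - R v a) - c a / D a"
        using n1 by (simp add: field_simps)
      finally show ?thesis by simp
    qed
    have "0 = (\<Sum>a\<in>UNIV. c a / (lam v - R v a)) - (\<Sum>a\<in>UNIV. c a / D a)"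
      using lamP[of v] lamP[of u] by (simp add: D_def)
    also have "\<dots> = (\<Sum>a\<in>UNIV. c a / (lam v - R v a) - c a / D a)" by (simp add: sum_subtractf)
    also have "\<dots> = - ((lam v - lam u) * B v + (v - u) * A v)"
      by (simp only: trm) (simp add: A_def B_def sum.distrib sum_distrib_left sum_negf sum_subtractf)
    finally show ?thesis by linarith
  qed
  have Bpos: "B v > 0" for v unfolding B_def
    by (rule sum_pos) (use cpos Dp D'p in \<open>auto intro!: divide_pos_pos mult_pos_pos\<close>)
  have Ab: "\<bar>A v\<bar> \<le> G * B v" for v
  proof -
    have "\<bar>A v\<bar> \<le> (\<Sum>a\<in>UNIV. \<bar>c a * g a / (D a * (lam v - R v a))\<bar>)" unfolding A_def by (rule sum_abs)
    also have "\<dots> \<le> (\<Sum>a\<in>UNIV. G * (c a / (D a * (lam v - R v a))))"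
    proof (rule sum_mono)
      fix a
      have pos: "c a / (D a * (lam v - R v a)) > 0" using cpos Dp D'p by (auto intro!: divide_pos_pos mult_pos_pos)
      have gG: "\<bar>g a\<bar> \<le> G" unfolding G_def by (rule member_le_sum) auto
      have "\<bar>c a * g a / (D a * (lam v - R v a))\<bar> = \<bar>g a\<bar> * (c a / (D a * (lam v - R v a)))"
        using cpos[rule_format, of a] Dp[of a] D'p[of v a] by (simp add: abs_mult abs_divide)
      also have "\<dots> \<le> G * (c a / (D a * (lam v - R v a)))" using gG pos by (intro mult_right_mono) auto
      finally show "\<bar>c a * g a / (D a * (lam v - R v a))\<bar> \<le> G * (c a / (D a * (lam v - R v a)))" .
    qed
    also have "\<dots> = G * B v" by (simp add: B_def sum_distrib_left)
    finally show ?thesis .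
  qed
  have lip: "\<bar>lam v - lam u\<bar> \<le> G * \<bar>v - u\<bar>" for v
  proof -
    have "\<bar>(lam v - lam u) * B v\<bar> = \<bar>- (v - u) * A v\<bar>" using ident[of v] by simp
    then have "\<bar>lam v - lam u\<bar> * B v = \<bar>v - u\<bar> * \<bar>A v\<bar>" using Bpos[of v]
      by (simp add: abs_mult abs_minus_commute)
    also have "\<dots> \<le> \<bar>v - u\<bar> * (G * B v)" using Ab[of v] by (simp add: mult_left_mono)
    finally have "\<bar>lam v - lam u\<bar> * B v \<le> (G * \<bar>v - u\<bar>) * B v" by (simp add: algebra_simps)
    then show ?thesis using Bpos[of v] by (rule mult_right_le_imp_le)
  qed
  have lamc: "(lam \<longlongrightarrow> lam u) (at u)"
  proof -
    have "((\<lambda>v. lam v - lam u) \<longlongrightarrow> 0) (at u)"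
    proof (rule Lim_null_comparison)
      show "\<forall>\<^sub>F v in at u. norm (lam v - lam u) \<le> G * \<bar>v - u\<bar>" using lip by simp
      have "((\<lambda>v. G * \<bar>v - u\<bar>) \<longlongrightarrow> G * \<bar>u - u\<bar>) (at u)" by (intro tendsto_intros)
      then show "((\<lambda>v. G * \<bar>v - u\<bar>) \<longlongrightarrow> 0) (at u)" by simp
    qed
    then show ?thesis by (simp add: LIM_zero_iff)
  qed
  have Rc: "((\<lambda>v. R v a) \<longlongrightarrow> R u a) (at u)" for a
    unfolding R_def by (intro tendsto_intros)
  have Ac: "(A \<longlongrightarrow> A u) (at u)" unfolding A_def
    by (intro tendsto_intros lamc Rc) (use D'p Dp in \<open>auto simp: less_imp_neq[symmetric]\<close>)
  have Bc: "(B \<longlongrightarrow> B u) (at u)" unfolding B_def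
    by (intro tendsto_intros lamc Rc) (use D'p Dp in \<open>auto simp: less_imp_neq[symmetric]\<close>)
  have lim: "((\<lambda>v. - A v / B v) \<longlongrightarrow> - A u / B u) (at u)"
    by (intro tendsto_intros Ac Bc) (use Bpos[of u] in simp)
  have ev: "\<forall>\<^sub>F v in at u. - A v / B v = (lam v - lam u) / (v - u)"
  proof -
    have "\<forall>\<^sub>F v in at u. v \<noteq> u" by (simp add: eventually_at_filter)
    then show ?thesis
    proof (rule eventually_mono)
      fix v assume "v \<noteq> u"
      then show "- A v / B v = (lam v - lam u) / (v - u)"
        using ident[of v] Bpos[of v] by (simp add: field_simps)
    qed
  qed
  have "((\<lambda>v. (lam v - lam u) / (v - u)) \<longlongrightarrow> - A u / B u) (at u)"
    using lim tendsto_cong[OF ev] by blast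
  then have "(lam has_real_derivative (- A u / B u)) (at u)" by (simp add: has_field_derivative_iff)
  then show ?thesis by (simp add: A_def B_def D_def)
qed



theorem lemma5p3:
  fixes r rh pref :: "'a::finite \<Rightarrow> real" and eta u :: real
  assumes r_range: "\<forall>a. 0 \<le> r a \<and> r a \<le> 1"
    and rh_range: "\<forall>a. 0 \<le> rh a \<and> rh a \<le> 1"
    and eta_pos: "eta > 0"
    and pref_dist: "pref \<in> Delta"
    and pref_pos: "\<forall>a. pref a > 0"
    and u_range: "0 < u" "u < 1"
  shows
    "let g = (\<lambda>a. r a - rh a);
         \<pi> = pol_u eta pref r rh;
         F = (\<lambda>v. eta / 2 *
                ((\<Sum>a\<in>UNIV. (\<pi> v a)\<^sup>2 / pref a * (g a)\<^sup>2)
                 - (\<Sum>a\<in>UNIV. (\<pi> v a)\<^sup>2 / pref a * g a)\<^sup>2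
                   / (\<Sum>a\<in>UNIV. (\<pi> v a)\<^sup>2 / pref a)));
         w = (\<lambda>a. \<pi> u a / pref a);
         Z = (\<Sum>a\<in>UNIV. (\<pi> u a)\<^sup>2 / pref a);
         \<mu> = (\<lambda>a. ((\<pi> u a)\<^sup>2 / pref a) / Z);
         Eg = (\<Sum>a'\<in>UNIV. \<mu> a' * g a')
     in (F has_real_derivative
           (- (eta\<^sup>2) * Z * (\<Sum>a\<in>UNIV. \<mu> a * (w a * (g a - Eg) ^ 3)))) (at u)"

proof -
  define c where "c a = pref a / eta" for a
  define R where "R = (\<lambda>v a. (1 - v) * r a + v * rh a)"
  define g where "g = (\<lambda>a. r a - rh a)"
  define lam where "lam v = (SOME l. (\<forall>a. R v a < l) \<and> (\<Sum>a\<in>UNIV. c a / (l - R v a)) = 1)" for v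
  have cpos: "\<forall>a. c a > 0" using pref_pos eta_pos by (simp add: c_def)
  have lamP: "(\<forall>a. R v a < lam v) \<and> (\<Sum>a\<in>UNIV. c a / (lam v - R v a)) = 1" for v
  proof -
    have "\<exists>l. (\<forall>a. R v a < l) \<and> (\<Sum>a\<in>UNIV. c a / (l - R v a)) = 1"
      using lam_exists[OF eta_pos pref_dist pref_pos, of "R v"] by (simp add: c_def)
    then show ?thesis unfolding lam_def by (rule someI_ex)
  qed
  have pol: "pol_u eta pref r rh = (\<lambda>v a. c a / (lam v - R v a))"
  proof (rule ext)
    fix v
    have "interp_reward r rh v = R v" by (simp add: interp_reward_def R_def)
    then show "pol_u eta pref r rh v = (\<lambda>a. c a / (lam v - R v a))"
      unfolding pol_u_def c_def using opt_pol_char[OF eta_pos pref_dist pref_pos, of "R v" "lam v"] lamP[of v]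
      by (simp add: c_def)
  qed
  have gg: "r a - rh a = g a" for a by (simp add: g_def)
  define D where "D a = lam u - R u a" for a
  have Dp: "D a > 0" for a using lamP[of u] by (simp add: D_def)
  define Aa where "Aa = (\<Sum>a\<in>UNIV. c a * g a / (D a * D a))"
  define Bb where "Bb = (\<Sum>a\<in>UNIV. c a / (D a * D a))"
  define L where "L = - Aa / Bb"
  have dlam: "(lam has_real_derivative L) (at u)"
    using lam_deriv[OF R_def g_def cpos lamP, of u] by (simp add: L_def Aa_def Bb_def D_def)
  define P where "P a = c a / D a" for a
  define P' where "P' a = - c a * (L + g a) / (D a * D a)" for a
  have dP: "((\<lambda>v. c a / (lam v - R v a)) has_real_derivative P' a) (at u)" for a
  proof -
    have d1: "((\<lambda>v. lam v - R v a) has_real_derivative (L - (rh a - r a))) (at u)"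
      unfolding R_def
      by (rule DERIV_diff[OF dlam]) (rule DERIV_cong, (rule derivative_intros)+, simp add: algebra_simps)
    have "((\<lambda>v. c a / (lam v - R v a)) has_real_derivative
        (0 * (lam u - R u a) - c a * (L - (rh a - r a))) / ((lam u - R u a) * (lam u - R u a))) (at u)"
      by (rule DERIV_divide[OF DERIV_const d1]) (use Dp[of a] in \<open>simp add: D_def\<close>)
    then show ?thesis by (rule DERIV_cong) (simp add: P'_def D_def g_def algebra_simps)
  qed
  define q where "q a = (P a)^2 / pref a" for a
  define q' where "q' a = 2 * P a * P' a / pref a" for a
  have dq: "((\<lambda>v. (c a / (lam v - R v a))^2 / pref a) has_real_derivative q' a) (at u)" for a
    by (rule DERIV_cong[OF DERIV_cdivide[OF DERIV_power[OF dP]]]) (simp add: q'_def P_def D_def)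
  define S0 where "S0 v = (\<Sum>a\<in>UNIV. (c a / (lam v - R v a))\<^sup>2 / pref a)" for v
  define S1 where "S1 v = (\<Sum>a\<in>UNIV. (c a / (lam v - R v a))\<^sup>2 / pref a * g a)" for v
  define S2 where "S2 v = (\<Sum>a\<in>UNIV. (c a / (lam v - R v a))\<^sup>2 / pref a * (g a)\<^sup>2)" for v
  define T0 where "T0 = (\<Sum>a\<in>UNIV. q' a)"
  define T1 where "T1 = (\<Sum>a\<in>UNIV. q' a * g a)"
  define T2 where "T2 = (\<Sum>a\<in>UNIV. q' a * (g a)\<^sup>2)"
  have dS0: "(S0 has_real_derivative T0) (at u)" unfolding S0_def T0_def
    by (rule DERIV_sum) (rule dq)
  have dS1: "(S1 has_real_derivative T1) (at u)" unfolding S1_def T1_def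
    by (rule DERIV_sum) (rule DERIV_cmult_right[OF dq])
  have dS2: "(S2 has_real_derivative T2) (at u)" unfolding S2_def T2_def
    by (rule DERIV_sum) (rule DERIV_cmult_right[OF dq])
  have S0u: "S0 u = (\<Sum>a\<in>UNIV. q a)" by (simp add: S0_def q_def P_def D_def)
  have S1u: "S1 u = (\<Sum>a\<in>UNIV. q a * g a)" by (simp add: S1_def q_def P_def D_def)
  have qpos: "q a > 0" for a using cpos[rule_format, of a] Dp[of a] pref_pos[rule_format, of a] by (simp add: q_def P_def)
  have S0pos: "S0 u > 0" unfolding S0u by (rule sum_pos) (use qpos in auto)
  define E where "E = S1 u / S0 u"
  have dF: "((\<lambda>v. eta / 2 * (S2 v - (S1 v)\<^sup>2 / S0 v)) has_real_derivative
      eta / 2 * (T2 - (real 2 * (T1 * (S1 u) ^ (2 - Suc 0)) * S0 u - (S1 u)\<^sup>2 * T0) / (S0 u * S0 u))) (at u)"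
    by (rule DERIV_cmult[OF DERIV_diff[OF dS2 DERIV_divide[OF DERIV_power[OF dS1] dS0]]]) (use S0pos in simp)
  have qc: "q a = c a / (D a * D a) / eta" for a
    using pref_pos eta_pos Dp[of a] by (simp add: q_def P_def c_def field_simps power2_eq_square)
  have S0B: "S0 u = Bb / eta" unfolding S0u Bb_def qc by (simp add: sum_divide_distrib)
  have S1A: "S1 u = Aa / eta" unfolding S1u Aa_def qc by (simp add: sum_divide_distrib)
  have LE: "L = - E" unfolding L_def E_def S0B S1A using eta_pos by simp
  have keyP: "P' a = - eta * P a * (P a / pref a) * (g a - E)" for a
    using pref_pos eta_pos Dp[of a] unfolding P'_def LE P_def c_def
    by (simp add: field_simps)
  have keyq: "q' a = - 2 * eta * q a * (P a / pref a) * (g a - E)" for a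
    unfolding q'_def keyP q_def by (simp add: power2_eq_square)
  have sumid: "(\<Sum>a\<in>UNIV. q' a * (g a - E)\<^sup>2) = T2 - 2 * E * T1 + E\<^sup>2 * T0"
    unfolding T0_def T1_def T2_def
    by (simp add: power2_eq_square algebra_simps sum.distrib sum_subtractf sum_distrib_left)
  have quot: "(real 2 * (T1 * (S1 u) ^ (2 - Suc 0)) * S0 u - (S1 u)\<^sup>2 * T0) / (S0 u * S0 u)
      = 2 * E * T1 - E\<^sup>2 * T0"
    using S0pos unfolding E_def by (simp add: field_simps power2_eq_square)
  have "eta / 2 * (T2 - (real 2 * (T1 * (S1 u) ^ (2 - Suc 0)) * S0 u - (S1 u)\<^sup>2 * T0) / (S0 u * S0 u))
      = eta / 2 * (\<Sum>a\<in>UNIV. q' a * (g a - E)\<^sup>2)" unfolding quot sumid by simp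
  also have "\<dots> = - (eta\<^sup>2) * (\<Sum>a\<in>UNIV. q a * (P a / pref a * (g a - E) ^ 3))"
  proof -
    have "(\<Sum>a\<in>UNIV. q' a * (g a - E)\<^sup>2) = (\<Sum>a\<in>UNIV. (- 2 * eta) * (q a * (P a / pref a * (g a - E) ^ 3)))"
      unfolding keyq by (rule sum.cong) (simp_all add: power2_eq_square power3_eq_cube)
    then show ?thesis unfolding sum_distrib_left[symmetric] by (simp only: power2_eq_square) simp
  qed
  also have "\<dots> = - (eta\<^sup>2) * S0 u * (\<Sum>a\<in>UNIV. q a / S0 u * (P a / pref a * (g a - (\<Sum>a'\<in>UNIV. q a' / S0 u * g a')) ^ 3))"
  proof -
    have EE: "(\<Sum>a'\<in>UNIV. q a' / S0 u * g a') = E"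
      unfolding E_def S1u by (simp add: sum_divide_distrib)
    show ?thesis unfolding EE using S0pos
      by (simp add: sum_distrib_left)
  qed
  finally have dF': "((\<lambda>v. eta / 2 * (S2 v - (S1 v)\<^sup>2 / S0 v)) has_real_derivative
      - (eta\<^sup>2) * S0 u * (\<Sum>a\<in>UNIV. q a / S0 u * (P a / pref a * (g a - (\<Sum>a'\<in>UNIV. q a' / S0 u * g a')) ^ 3))) (at u)"
    using dF by simp
  show ?thesis
    unfolding Let_def pol gg
    using dF' unfolding S0_def S1_def S2_def q_def P_def D_def .
qed

end
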